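(* (Consistency of DCC.) There is no label context $\Delta$, universe $U$ and DCC term $M$ such that $\Delta;\cdot\vdash M:(\Pi A{:}U.\,A)$.
   Context: DCC (Defunctionalized Calculus of Constructions): expressions $A,B,L,M,N::=x\mid U_i\mid\Pi x{:}A.B\mid L@M\mid\ell_i\{\overline M\}$, where $\ell_i$ ($i\in\mathbb N$) are label names disjoint from variables and $\overline M=M_1,\dots,M_n$ ($n\ge0$); universes are $U_i$. Type contexts $\Gamma::=\cdot\mid\Gamma,x{:}A$; label contexts $\Delta::=\cdot\mid\Delta,\ell_i(\{\overline x{:}\overline A\},x{:}A\mapsto M:B)$. Substitution standard with $\ell\{\overline M\}[N/x]=\ell\{\overline{M[N/x]}\}$; $[\overline M/\overline x]=[M_1/x_1,\dots,M_n/x_n]$. Reduction: $\Delta\vdash\ell\{\overline M\}@N\triangleright L[\overline M/\overline x,N/x]$ when $\ell(\{\overline x{:}\overline A\},x{:}A\mapsto L:B)\in\Delta$. Equivalence $\Delta\vdash M\equiv N$: common reduct; or $\Delta\vdash L\triangleright^*\ell\{\overline N\}$, $\Delta\vdash M\triangleright^*M'$, $\ell(\{\overline x{:}\overline A\},x{:}A\mapsto N:B)\in\Delta$, $\Delta\vdash N[\overline N/\overline x]\equiv M'@x$ give $\Delta\vdash L\equiv M$; or symmetrically. Typing and formation (mutual): variables from a well-formed context, $U_i:U_{i+1}$, $\Pi x{:}A.B:U_{\max(i,j)}$ when $A:U_i$ and $B:U_j$ under $x{:}A$, $M@N:B[N/x]$ when $M:\Pi x{:}A.B$ and $N:A$,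 conversion along $\equiv$ to a type $B:U_i$, and: if $\vdash\Delta;\Gamma$, $\ell(\{\overline x{:}\overline A\},x{:}A\mapsto M:B)\in\Delta$, $|\overline M|=|\overline x|$ and $\Delta;\Gamma\vdash M_k:A_k[M_1/x_1,\dots,M_{k-1}/x_{k-1}]$ for all $k$, then $\Delta;\Gamma\vdash\ell\{\overline M\}:\Pi x{:}A[\overline M/\overline x].B[\overline M/\overline x]$. Formation: $\vdash\cdot;\cdot$; a fresh label entry $\ell(\{\overline x{:}\overline A\},x{:}A\mapsto M:B)$ may be added when $\Delta;\overline x{:}\overline A\vdash\Pi x{:}A.B:U_i$ and $\Delta;\overline x{:}\overline A,x{:}A\vdash M:B$; $\vdash\Delta;\Gamma$ and $\Delta;\Gamma\vdash A:U_i$ give $\vdash\Delta;\Gamma,x{:}A$. *)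

theory Defs
  imports Main
begin

text \<open>DCC syntax with de Bruijn indices.  In \<open>Pi A B\<close> the body \<open>B\<close> binds index 0.
  \<open>Lab l Ms\<close> is the label closure \<open>\<ell>_l{Ms}\<close>.\<close>

datatype trm =
    Var nat
  | Univ nat
  | Pi trm trm
  | App trm trm
  | Lab nat "trm list"

primrec ren :: "(nat \<Rightarrow> nat) \<Rightarrow> trm \<Rightarrow> trm" where
  "ren f (Var i) = Var (f i)"
| "ren f (Univ i) = Univ i"
| "ren f (Pi A B) = Pi (ren f A) (ren (\<lambda>n. case n of 0 \<Rightarrow> 0 | Suc k \<Rightarrow> Suc (f k)) B)"
| "ren f (App M N) = App (ren f M) (ren f N)"
| "ren f (Lab l Ms) = Lab l (map (ren f) Ms)"

definition lift :: "nat \<Rightarrow> trm \<Rightarrow> trm" where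
  "lift k = ren (\<lambda>j. j + k)"

definition up :: "(nat \<Rightarrow> trm) \<Rightarrow> nat \<Rightarrow> trm" where
  "up \<sigma> = (\<lambda>n. case n of 0 \<Rightarrow> Var 0 | Suc k \<Rightarrow> lift 1 (\<sigma> k))"

primrec subst :: "(nat \<Rightarrow> trm) \<Rightarrow> trm \<Rightarrow> trm" where
  "subst \<sigma> (Var i) = \<sigma> i"
| "subst \<sigma> (Univ i) = Univ i"
| "subst \<sigma> (Pi A B) = Pi (subst \<sigma> A) (subst (up \<sigma>) B)"
| "subst \<sigma> (App M N) = App (subst \<sigma> M) (subst \<sigma> N)"
| "subst \<sigma> (Lab l Ms) = Lab l (map (subst \<sigma>) Ms)"

text \<open>\<open>inst [M1,...,Mn]\<close> is the substitution \<open>[M1/x1,...,Mn/xn]\<close> for a telescope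
  \<open>x1..xn\<close> (so \<open>xn\<close> is index 0); remaining indices are shifted down by n.\<close>
definition inst :: "trm list \<Rightarrow> nat \<Rightarrow> trm" where
  "inst Ms = (\<lambda>k. if k < length Ms then rev Ms ! k else Var (k - length Ms))"

text \<open>A label entry \<open>\<ell>_l({x1:A1,...,xn:An}, x:A \<mapsto> M : B)\<close> is \<open>(l, [A1,...,An], A, M, B)\<close>,
  where \<open>Ak\<close> lives in the context \<open>x1..x(k-1)\<close>, \<open>A\<close> in \<open>x1..xn\<close>, and \<open>M\<close>, \<open>B\<close> in
  \<open>x1..xn,x\<close>.  Label contexts are lists with the newest entry first.
  Type contexts are lists with the newest variable (index 0) first; each entry
  is typed in the tail of the list.\<close>
type_synonym lentry = "nat \<times> trm list \<times> trm \<times> trm \<times> trm"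
type_synonym lctx = "lentry list"
type_synonym tctx = "trm list"

inductive red :: "lctx \<Rightarrow> trm \<Rightarrow> trm \<Rightarrow> bool" where
  red_lab: "(l, As, A, L, B) \<in> set \<Delta> \<Longrightarrow> length Ms = length As \<Longrightarrow>
     red \<Delta> (App (Lab l Ms) N) (subst (inst (Ms @ [N])) L)"

inductive reds :: "lctx \<Rightarrow> trm \<Rightarrow> trm \<Rightarrow> bool" where
  reds_refl: "reds \<Delta> M M"
| reds_step: "red \<Delta> M N \<Longrightarrow> reds \<Delta> M N"
| reds_trans: "reds \<Delta> L M \<Longrightarrow> reds \<Delta> M N \<Longrightarrow> reds \<Delta> L N"
| reds_pi: "reds \<Delta> A A' \<Longrightarrow> reds \<Delta> B B' \<Longrightarrow> reds \<Delta> (Pi A B) (Pi A' B')"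
| reds_app: "reds \<Delta> M M' \<Longrightarrow> reds \<Delta> N N' \<Longrightarrow> reds \<Delta> (App M N) (App M' N')"
| reds_lab: "list_all2 (reds \<Delta>) Ms Ms' \<Longrightarrow> reds \<Delta> (Lab l Ms) (Lab l Ms')"

text \<open>In the eta rule
  the bound variable \<open>x\<close> is index 0, \<open>N[Ns/xs]\<close> is \<open>subst (up (inst Ns)) N\<close>, and
  \<open>M'@x\<close> is \<open>App (lift 1 M') (Var 0)\<close>.\<close>
inductive equiv :: "lctx \<Rightarrow> trm \<Rightarrow> trm \<Rightarrow> bool" where
  eq_reduct: "reds \<Delta> M L \<Longrightarrow> reds \<Delta> N L \<Longrightarrow> equiv \<Delta> M N"
| eq_eta1: "reds \<Delta> L (Lab l Ns) \<Longrightarrow> reds \<Delta> M M' \<Longrightarrow> (l, As, A, N, B) \<in> set \<Delta> \<Longrightarrow>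
     length Ns = length As \<Longrightarrow>
     equiv \<Delta> (subst (up (inst Ns)) N) (App (lift 1 M') (Var 0)) \<Longrightarrow> equiv \<Delta> L M"
| eq_eta2: "reds \<Delta> L (Lab l Ns) \<Longrightarrow> reds \<Delta> M M' \<Longrightarrow> (l, As, A, N, B) \<in> set \<Delta> \<Longrightarrow>
     length Ns = length As \<Longrightarrow>
     equiv \<Delta> (App (lift 1 M') (Var 0)) (subst (up (inst Ns)) N) \<Longrightarrow> equiv \<Delta> M L"

inductive typing :: "lctx \<Rightarrow> tctx \<Rightarrow> trm \<Rightarrow> trm \<Rightarrow> bool"
  and wf :: "lctx \<Rightarrow> tctx \<Rightarrow> bool" where
  t_var: "wf \<Delta> \<Gamma> \<Longrightarrow> i < length \<Gamma> \<Longrightarrow> typing \<Delta> \<Gamma> (Var i) (lift (Suc i) (\<Gamma> ! i))"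
| t_univ: "wf \<Delta> \<Gamma> \<Longrightarrow> typing \<Delta> \<Gamma> (Univ i) (Univ (Suc i))"
| t_pi: "typing \<Delta> \<Gamma> A (Univ i) \<Longrightarrow> typing \<Delta> (A # \<Gamma>) B (Univ j) \<Longrightarrow>
     typing \<Delta> \<Gamma> (Pi A B) (Univ (max i j))"
| t_app: "typing \<Delta> \<Gamma> M (Pi A B) \<Longrightarrow> typing \<Delta> \<Gamma> N A \<Longrightarrow>
     typing \<Delta> \<Gamma> (App M N) (subst (inst [N]) B)"
| t_conv: "typing \<Delta> \<Gamma> M A \<Longrightarrow> equiv \<Delta> A B \<Longrightarrow> typing \<Delta> \<Gamma> B (Univ i) \<Longrightarrow>
     typing \<Delta> \<Gamma> M B"
| t_lab: "wf \<Delta> \<Gamma> \<Longrightarrow> (l, As, A, L, B) \<in> set \<Delta> \<Longrightarrow> length Ms = length As \<Longrightarrow>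
     (\<forall>k < length Ms. typing \<Delta> \<Gamma> (Ms ! k) (subst (inst (take k Ms)) (As ! k))) \<Longrightarrow>
     typing \<Delta> \<Gamma> (Lab l Ms) (subst (inst Ms) (Pi A B))"
| wf_empty: "wf [] []"
| wf_label: "typing \<Delta> (rev As) (Pi A B) (Univ i) \<Longrightarrow> typing \<Delta> (A # rev As) M B \<Longrightarrow>
     l \<notin> fst ` set \<Delta> \<Longrightarrow> wf ((l, As, A, M, B) # \<Delta>) []"
| wf_cons: "wf \<Delta> \<Gamma> \<Longrightarrow> typing \<Delta> \<Gamma> A (Univ i) \<Longrightarrow> wf \<Delta> (A # \<Gamma>)"

end

theory Submission
  imports Defs
begin

lemma ren_ren: "ren f (ren g t) = ren (f \<circ> g) t"
proof (induction t arbitrary: f g)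
  case (Pi A B)
  let ?F = "(\<lambda>n. case n of 0 \<Rightarrow> 0 | Suc k \<Rightarrow> Suc (f k))"
  let ?G = "(\<lambda>n. case n of 0 \<Rightarrow> 0 | Suc k \<Rightarrow> Suc (g k))"
  have e: "?F \<circ> ?G = (\<lambda>n. case n of 0 \<Rightarrow> 0 | Suc k \<Rightarrow> Suc ((f \<circ> g) k))"
    by (auto simp: fun_eq_iff split: nat.split)
  have "ren f (ren g (Pi A B)) = Pi (ren f (ren g A)) (ren ?F (ren ?G B))" by simp
  also have "\<dots> = Pi (ren (f \<circ> g) A) (ren (?F \<circ> ?G) B)" by (simp only: Pi.IH)
  also have "\<dots> = ren (f \<circ> g) (Pi A B)" by (simp only: e ren.simps)
  finally show ?case .
qed auto

lemma up_Suc: "up \<sigma> (Suc k) = lift 1 (\<sigma> k)" by (simp add: up_def)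
lemma up_0: "up \<sigma> 0 = Var 0" by (simp add: up_def)

lemma subst_ren: "subst \<sigma> (ren f t) = subst (\<sigma> \<circ> f) t"
proof (induction t arbitrary: \<sigma> f)
  case (Pi A B)
  let ?F = "(\<lambda>n. case n of 0 \<Rightarrow> 0 | Suc k \<Rightarrow> Suc (f k))"
  have e: "up \<sigma> \<circ> ?F = up (\<sigma> \<circ> f)"
    by (auto simp: fun_eq_iff up_def split: nat.split)
  have "subst \<sigma> (ren f (Pi A B)) = Pi (subst \<sigma> (ren f A)) (subst (up \<sigma>) (ren ?F B))" by simp
  also have "\<dots> = Pi (subst (\<sigma> \<circ> f) A) (subst (up \<sigma> \<circ> ?F) B)" by (simp only: Pi.IH)
  also have "\<dots> = subst (\<sigma> \<circ> f) (Pi A B)" by (simp only: e subst.simps)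
  finally show ?case .
qed auto

lemma ren_subst: "ren f (subst \<sigma> t) = subst (ren f \<circ> \<sigma>) t"
proof (induction t arbitrary: \<sigma> f)
  case (Pi A B)
  let ?F = "(\<lambda>n. case n of 0 \<Rightarrow> 0 | Suc k \<Rightarrow> Suc (f k))"
  have e: "ren ?F \<circ> up \<sigma> = up (ren f \<circ> \<sigma>)"
  proof
    fix n show "(ren ?F \<circ> up \<sigma>) n = up (ren f \<circ> \<sigma>) n"
    proof (cases n)
      case (Suc k)
      have "?F \<circ> (\<lambda>j. j + 1) = (\<lambda>j. j + 1) \<circ> f" by (auto simp: fun_eq_iff)
      then show ?thesis using Suc by (simp add: up_def lift_def ren_ren)
    qed (simp add: up_def)
  qed
  have "ren f (subst \<sigma> (Pi A B)) = Pi (ren f (subst \<sigma> A)) (ren ?F (subst (up \<sigma>) B))" by simp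
  also have "\<dots> = Pi (subst (ren f \<circ> \<sigma>) A) (subst (ren ?F \<circ> up \<sigma>) B)" by (simp only: Pi.IH)
  also have "\<dots> = subst (ren f \<circ> \<sigma>) (Pi A B)" by (simp only: e subst.simps)
  finally show ?case .
qed auto

lemma subst_subst: "subst \<sigma> (subst \<tau> t) = subst (subst \<sigma> \<circ> \<tau>) t"
proof (induction t arbitrary: \<sigma> \<tau>)
  case (Pi A B)
  have e: "subst (up \<sigma>) \<circ> up \<tau> = up (subst \<sigma> \<circ> \<tau>)"
  proof
    fix n show "(subst (up \<sigma>) \<circ> up \<tau>) n = up (subst \<sigma> \<circ> \<tau>) n"
    proof (cases n)
      case (Suc k)
      have "up \<sigma> \<circ> (\<lambda>j. j + 1) = ren (\<lambda>j. j + 1) \<circ> \<sigma>" by (auto simp: fun_eq_iff up_def lift_def)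
      then show ?thesis using Suc by (simp add: up_def lift_def subst_ren ren_subst)
    qed (simp add: up_def)
  qed
  have "subst \<sigma> (subst \<tau> (Pi A B)) = Pi (subst \<sigma> (subst \<tau> A)) (subst (up \<sigma>) (subst (up \<tau>) B))" by simp
  also have "\<dots> = Pi (subst (subst \<sigma> \<circ> \<tau>) A) (subst (subst (up \<sigma>) \<circ> up \<tau>) B)" by (simp only: Pi.IH)
  also have "\<dots> = subst (subst \<sigma> \<circ> \<tau>) (Pi A B)" by (simp only: e subst.simps)
  finally show ?case .
qed auto

lemma up_Var: "up Var = Var"
  by (auto simp: fun_eq_iff up_def lift_def split: nat.split)

lemma subst_Var: "subst Var t = t"
  by (induction t) (auto simp: up_Var map_idI)

definition scons :: "trm \<Rightarrow> (nat \<Rightarrow> trm) \<Rightarrow> nat \<Rightarrow> trm" where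
  "scons a \<sigma> = (\<lambda>n. case n of 0 \<Rightarrow> a | Suc k \<Rightarrow> \<sigma> k)"

lemma inst_single_up: "subst (inst [a]) (subst (up \<sigma>) B) = subst (scons a \<sigma>) B"
proof -
  have "subst (inst [a]) \<circ> up \<sigma> = scons a \<sigma>"
    by (auto simp: fun_eq_iff up_def lift_def subst_ren scons_def inst_def comp_def subst_Var split: nat.split)
  then show ?thesis by (simp add: subst_subst)
qed

lemma subst_lift1_scons: "subst (scons a \<sigma>) (lift (Suc k) t) = subst \<sigma> (lift k t)"
  by (simp add: lift_def subst_ren comp_def scons_def)

lemma inst_snoc: "inst (Ms @ [a]) = scons a (inst Ms)"
  by (auto simp: fun_eq_iff inst_def scons_def nth_append split: nat.split)

fun cl :: "nat \<Rightarrow> trm \<Rightarrow> bool" where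
  "cl n (Var i) = (i < n)"
| "cl n (Univ i) = True"
| "cl n (Pi A B) = (cl n A \<and> cl (Suc n) B)"
| "cl n (App M N) = (cl n M \<and> cl n N)"
| "cl n (Lab l Ms) = (\<forall>M\<in>set Ms. cl n M)"

lemma cl_subst_eq: "cl n t \<Longrightarrow> (\<forall>k<n. \<sigma> k = \<sigma>' k) \<Longrightarrow> subst \<sigma> t = subst \<sigma>' t"
proof (induction t arbitrary: n \<sigma> \<sigma>')
  case (Pi A B)
  have "\<forall>k<Suc n. up \<sigma> k = up \<sigma>' k"
    using Pi.prems(2) by (auto simp: up_def split: nat.split)
  then show ?case using Pi.IH(1)[of n \<sigma> \<sigma>'] Pi.IH(2)[of "Suc n" "up \<sigma>" "up \<sigma>'"] Pi.prems by simp
next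
  case (Lab l Ms)
  then show ?case by simp blast
next
  case (App M N)
  then show ?case by (metis cl.simps(4) subst.simps(4))
qed simp_all

lemma cl_ren: "cl n t \<Longrightarrow> (\<forall>k<n. f k < m) \<Longrightarrow> cl m (ren f t)"
proof (induction t arbitrary: n m f)
  case (Pi A B)
  have "\<forall>k<Suc n. (case k of 0 \<Rightarrow> 0 | Suc k \<Rightarrow> Suc (f k)) < Suc m"
    using Pi.prems(2) by (auto split: nat.split)
  then show ?case using Pi.IH(1)[of n f m] Pi.IH(2)[of "Suc n" _ "Suc m"] Pi.prems by simp
qed auto

lemma cl_subst: "cl n t \<Longrightarrow> (\<forall>k<n. cl m (\<sigma> k)) \<Longrightarrow> cl m (subst \<sigma> t)"
proof (induction t arbitrary: n m \<sigma>)
  case (Pi A B)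
  have "\<forall>k<Suc n. cl (Suc m) (up \<sigma> k)"
    using Pi.prems(2) by (auto simp: up_def lift_def intro: cl_ren split: nat.split)
  then show ?case using Pi.IH(1)[of n m \<sigma>] Pi.IH(2)[of "Suc n" "Suc m" "up \<sigma>"] Pi.prems by simp
qed auto

lemma cl_lift: "cl n t \<Longrightarrow> cl (n + k) (lift k t)"
  unfolding lift_def by (erule cl_ren) simp

definition ctxOK :: "tctx \<Rightarrow> bool" where
  "ctxOK \<Gamma> = (\<forall>k<length \<Gamma>. cl (length \<Gamma> - Suc k) (\<Gamma>!k))"

definition goodD :: "lctx \<Rightarrow> bool" where
  "goodD D = (distinct (map fst D) \<and> (\<forall>l As A L B. (l,As,A,L,B) \<in> set D \<longrightarrow>
      cl (Suc (length As)) L \<and> cl (length As) (Pi A B) \<and> ctxOK (rev As)))"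

lemma goodD_entry: "goodD D \<Longrightarrow> (l,As,A,L,B) \<in> set D \<Longrightarrow>
   cl (Suc (length As)) L \<and> cl (length As) (Pi A B) \<and> ctxOK (rev As)"
  unfolding goodD_def by blast

lemma goodD_uniq: "goodD D \<Longrightarrow> (l,X) \<in> set D \<Longrightarrow> (l,Y) \<in> set D \<Longrightarrow> X = Y"
  unfolding goodD_def by (meson eq_key_imp_eq_value)

lemma inst_lt: "k < length Ms \<Longrightarrow> inst Ms k = rev Ms ! k"
  by (simp add: inst_def)

lemma inst_map: "k < length Ms \<Longrightarrow> g (inst Ms k) = inst (map g Ms) k"
  by (simp add: inst_def rev_map)

lemma subst_inst_closed:
  assumes "cl (length Ms) t"
  shows "subst \<sigma> (subst (inst Ms) t) = subst (inst (map (subst \<sigma>) Ms)) t"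
proof -
  have "subst \<sigma> (subst (inst Ms) t) = subst (subst \<sigma> \<circ> inst Ms) t" by (rule subst_subst)
  also have "\<dots> = subst (inst (map (subst \<sigma>) Ms)) t"
    by (rule cl_subst_eq[OF assms]) (simp add: inst_map)
  finally show ?thesis .
qed

lemma ren_inst_closed:
  assumes "cl (length Ms) t"
  shows "ren f (subst (inst Ms) t) = subst (inst (map (ren f) Ms)) t"
proof -
  have "ren f (subst (inst Ms) t) = subst (ren f \<circ> inst Ms) t" by (rule ren_subst)
  also have "\<dots> = subst (inst (map (ren f) Ms)) t"
    by (rule cl_subst_eq[OF assms]) (simp add: inst_map)
  finally show ?thesis .
qed

inductive par :: "lctx \<Rightarrow> trm \<Rightarrow> trm \<Rightarrow> bool" for D where
  p_var: "par D (Var i) (Var i)"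
| p_univ: "par D (Univ i) (Univ i)"
| p_pi: "par D A A' \<Longrightarrow> par D B B' \<Longrightarrow> par D (Pi A B) (Pi A' B')"
| p_app: "par D M M' \<Longrightarrow> par D N N' \<Longrightarrow> par D (App M N) (App M' N')"
| p_lab: "list_all2 (par D) Ms Ms' \<Longrightarrow> par D (Lab l Ms) (Lab l Ms')"
| p_beta: "(l, As, A, L, B) \<in> set D \<Longrightarrow> length Ms = length As \<Longrightarrow> list_all2 (par D) Ms Ms' \<Longrightarrow>
    par D N N' \<Longrightarrow> par D (App (Lab l Ms) N) (subst (inst (Ms' @ [N'])) L)"

lemma par_refl: "par D t t"
proof (induction t)
  case (Lab l Ms) then show ?case by (auto intro!: p_lab list.rel_refl_strong)
qed (auto intro: par.intros)

inductive_cases par_VarE: "par D (Var i) t"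
inductive_cases par_UnivE: "par D (Univ i) t"
inductive_cases par_PiE: "par D (Pi A B) t"
inductive_cases par_LabE: "par D (Lab l Ms) t"
inductive_cases par_AppE: "par D (App M N) t"

lemma par_ren: "par D t t' \<Longrightarrow> goodD D \<Longrightarrow> (\<forall>f. par D (ren f t) (ren f t'))"
proof (induction rule: par.induct)
  case (p_lab Ms Ms' l)
  show ?case
  proof
    fix f
    have "list_all2 (\<lambda>x y. par D (ren f x) (ren f y)) Ms Ms'"
      using p_lab.IH by (rule list_all2_mono) (use p_lab.prems in auto)
    then have "list_all2 (par D) (map (ren f) Ms) (map (ren f) Ms')" by (simp add: list.rel_map)
    then show "par D (ren f (Lab l Ms)) (ren f (Lab l Ms'))" by (simp add: par.p_lab)
  qed
next
  case (p_beta l As A L B Ms Ms' N N')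
  show ?case
  proof
    fix f
    have "list_all2 (\<lambda>x y. par D (ren f x) (ren f y)) Ms Ms'"
      using p_beta.IH(1) by (rule list_all2_mono) (use p_beta.prems in auto)
    then have l2: "list_all2 (par D) (map (ren f) Ms) (map (ren f) Ms')" by (simp add: list.rel_map)
    have len: "length Ms' = length As" using p_beta.hyps(2) list_all2_lengthD[OF p_beta.IH(1)] by simp
    have cl: "cl (length (Ms' @ [N'])) L" using goodD_entry[OF p_beta.prems p_beta.hyps(1)] len by simp
    have "par D (App (Lab l (map (ren f) Ms)) (ren f N)) (subst (inst (map (ren f) Ms' @ [ren f N'])) L)"
      by (rule par.p_beta[OF p_beta.hyps(1)]) (use p_beta.hyps(2) l2 p_beta.IH(2) p_beta.prems in auto)
    then show "par D (ren f (App (Lab l Ms) N)) (ren f (subst (inst (Ms' @ [N'])) L))"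
      by (simp add: ren_inst_closed[OF cl])
  qed
next
  case (p_pi A A' B B') then show ?case by (simp add: par.p_pi)
next
  case (p_app M M' N N') then show ?case by (simp add: par.p_app)
qed (simp_all add: par.p_var par.p_univ)

lemma par_subst: "par D t t' \<Longrightarrow> goodD D \<Longrightarrow>
   (\<forall>\<sigma> \<sigma>'. (\<forall>k. par D (\<sigma> k) (\<sigma>' k)) \<longrightarrow> par D (subst \<sigma> t) (subst \<sigma>' t'))"
proof (induction rule: par.induct)
  case (p_pi A A' B B')
  show ?case
  proof (intro allI impI)
    fix \<sigma> \<sigma>' :: "nat \<Rightarrow> trm" assume h: "\<forall>k. par D (\<sigma> k) (\<sigma>' k)"
    have "\<forall>k. par D (up \<sigma> k) (up \<sigma>' k)"
    proof
      fix k show "par D (up \<sigma> k) (up \<sigma>' k)"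
        using h p_pi.prems par_ren[of D] by (cases k) (simp_all add: up_def lift_def par.p_var)
    qed
    then show "par D (subst \<sigma> (Pi A B)) (subst \<sigma>' (Pi A' B'))"
      using p_pi h by (simp add: par.p_pi)
  qed
next
  case (p_lab Ms Ms' l)
  show ?case
  proof (intro allI impI)
    fix \<sigma> \<sigma>' :: "nat \<Rightarrow> trm" assume h: "\<forall>k. par D (\<sigma> k) (\<sigma>' k)"
    have "list_all2 (\<lambda>x y. par D (subst \<sigma> x) (subst \<sigma>' y)) Ms Ms'"
      using p_lab.IH by (rule list_all2_mono) (use h p_lab.prems in auto)
    then have "list_all2 (par D) (map (subst \<sigma>) Ms) (map (subst \<sigma>') Ms')" by (simp add: list.rel_map)
    then show "par D (subst \<sigma> (Lab l Ms)) (subst \<sigma>' (Lab l Ms'))" by (simp add: par.p_lab)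
  qed
next
  case (p_beta l As A L B Ms Ms' N N')
  show ?case
  proof (intro allI impI)
    fix \<sigma> \<sigma>' :: "nat \<Rightarrow> trm" assume h: "\<forall>k. par D (\<sigma> k) (\<sigma>' k)"
    have "list_all2 (\<lambda>x y. par D (subst \<sigma> x) (subst \<sigma>' y)) Ms Ms'"
      using p_beta.IH(1) by (rule list_all2_mono) (use h p_beta.prems in auto)
    then have l2: "list_all2 (par D) (map (subst \<sigma>) Ms) (map (subst \<sigma>') Ms')" by (simp add: list.rel_map)
    have len: "length Ms' = length As" using p_beta.hyps(2) list_all2_lengthD[OF p_beta.IH(1)] by simp
    have cl: "cl (length (Ms' @ [N'])) L" using goodD_entry[OF p_beta.prems p_beta.hyps(1)] len by simp
    have "par D (App (Lab l (map (subst \<sigma>) Ms)) (subst \<sigma> N)) (subst (inst (map (subst \<sigma>') Ms' @ [subst \<sigma>' N'])) L)"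
      by (rule par.p_beta[OF p_beta.hyps(1)]) (use p_beta.hyps(2) l2 p_beta.IH(2) p_beta.prems h in auto)
    then show "par D (subst \<sigma> (App (Lab l Ms) N)) (subst \<sigma>' (subst (inst (Ms' @ [N'])) L))"
      by (simp add: subst_inst_closed[OF cl])
  qed
next
  case (p_app M M' N N') then show ?case by (simp add: par.p_app)
qed (simp_all add: par.p_univ)

lemma par_subst1: "par D t t' \<Longrightarrow> goodD D \<Longrightarrow> par D (subst \<sigma> t) (subst \<sigma> t')"
  using par_subst[of D t t'] par_refl by blast

lemma par_inst: "list_all2 (par D) Xs Ys \<Longrightarrow> par D (inst Xs k) (inst Ys k)"
  by (auto simp: inst_def list_all2_lengthD list_all2_rev list_all2_nthD intro: par.intros)

lemma list_diamond:
  "list_all2 (\<lambda>x y. R x y \<and> (\<forall>z. R x z \<longrightarrow> (\<exists>w. R y w \<and> R z w))) xs ys \<Longrightarrow> list_all2 R xs zs \<Longrightarrow>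
   \<exists>ws. list_all2 R ys ws \<and> list_all2 R zs ws"
proof (induction xs arbitrary: ys zs)
  case Nil then show ?case by auto
next
  case (Cons x xs)
  obtain y ys' where ys: "ys = y # ys'" using Cons.prems(1) by (cases ys) auto
  obtain z zs' where zs: "zs = z # zs'" using Cons.prems(2) by (cases zs) auto
  from Cons.prems ys zs obtain w where "R y w" "R z w" by auto
  moreover from Cons.prems ys zs Cons.IH obtain ws where "list_all2 R ys' ws" "list_all2 R zs' ws" by fastforce
  ultimately show ?case using ys zs by (intro exI[of _ "w # ws"]) auto
qed

lemma par_lab_inv: "par D (Lab l Ms) t \<Longrightarrow> \<exists>Ms'. t = Lab l Ms' \<and> list_all2 (par D) Ms Ms'"
  by (erule par_LabE) auto

lemma par_inst_subst: "goodD D \<Longrightarrow> list_all2 (par D) Xs Ys \<Longrightarrow>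
  par D (subst (inst Xs) L) (subst (inst Ys) L)"
  using par_subst[OF par_refl[of D L]] par_inst by blast

lemma par_AppE2:
  assumes "par D (App M N) t"
  obtains (papp) M2 N2 where "t = App M2 N2" "par D M M2" "par D N N2"
   | (pbeta) l As A L B Ms Ms2 N2 where "M = Lab l Ms" "(l,As,A,L,B) \<in> set D" "length Ms = length As"
       "list_all2 (par D) Ms Ms2" "par D N N2" "t = subst (inst (Ms2@[N2])) L"
  using assms by cases auto

lemma par_diamond: "par D t t1 \<Longrightarrow> goodD D \<Longrightarrow> (\<forall>t2. par D t t2 \<longrightarrow> (\<exists>t3. par D t1 t3 \<and> par D t2 t3))"
proof (induction rule: par.induct)
  case (p_var i) then show ?case by (auto elim: par_VarE)
next
  case (p_univ i) then show ?case by (auto elim: par_UnivE)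
next
  case (p_pi A A' B B')
  show ?case
  proof (intro allI impI)
    fix t2 assume "par D (Pi A B) t2"
    then obtain A2 B2 where t2: "t2 = Pi A2 B2" "par D A A2" "par D B B2" by (auto elim: par_PiE)
    obtain A3 where "par D A' A3" "par D A2 A3" using p_pi t2 by blast
    moreover obtain B3 where "par D B' B3" "par D B2 B3" using p_pi t2 by blast
    ultimately show "\<exists>t3. par D (Pi A' B') t3 \<and> par D t2 t3" using t2 by (blast intro: par.p_pi)
  qed
next
  case (p_lab Ms Ms' l)
  show ?case
  proof (intro allI impI)
    fix t2 assume "par D (Lab l Ms) t2"
    then obtain Ms2 where t2: "t2 = Lab l Ms2" "list_all2 (par D) Ms Ms2" by (auto elim: par_LabE)
    have "list_all2 (\<lambda>x y. par D x y \<and> (\<forall>z. par D x z \<longrightarrow> (\<exists>w. par D y w \<and> par D z w))) Ms Ms'"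
      using p_lab.IH by (rule list_all2_mono) (use p_lab.prems in auto)
    from list_diamond[OF this t2(2)] obtain Ms3 where "list_all2 (par D) Ms' Ms3" "list_all2 (par D) Ms2 Ms3" by blast
    then show "\<exists>t3. par D (Lab l Ms') t3 \<and> par D t2 t3" using t2 by (blast intro: par.p_lab)
  qed
next
  case (p_app M M' N N')
  show ?case
  proof (intro allI impI)
    fix t2 assume "par D (App M N) t2"
    then show "\<exists>t3. par D (App M' N') t3 \<and> par D t2 t3"
    proof (cases rule: par_AppE2)
      case (papp M2 N2)
      note 1 = papp
      obtain M3 where "par D M' M3" "par D M2 M3" using p_app 1 by blast
      moreover obtain N3 where "par D N' N3" "par D N2 N3" using p_app 1 by blast
      ultimately show ?thesis using 1 by (blast intro: par.p_app)
    next
      case (pbeta l As A L B Ms Ms2 N2)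
      note 2 = pbeta
      have "par D M (Lab l Ms2)" using 2 by (simp add: par.p_lab)
      then obtain M3 where m3: "par D M' M3" "par D (Lab l Ms2) M3" using p_app by blast
      have "par D M M'" using p_app by simp
      then obtain Ms1 where ms1: "M' = Lab l Ms1" "list_all2 (par D) Ms Ms1" using 2 by (auto dest: par_lab_inv)
      obtain Ms3 where ms3: "M3 = Lab l Ms3" "list_all2 (par D) Ms1 Ms3" "list_all2 (par D) Ms2 Ms3"
        using m3 ms1 by (auto dest!: par_lab_inv)
      obtain N3 where n3: "par D N' N3" "par D N2 N3" using p_app 2 by blast
      have len: "length Ms1 = length As" using list_all2_lengthD[OF ms1(2)] 2(3) by simp
      have "par D (App M' N') (subst (inst (Ms3 @ [N3])) L)"
        unfolding ms1(1) by (rule par.p_beta[OF 2(2) len ms3(2) n3(1)])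
      moreover have "par D t2 (subst (inst (Ms3 @ [N3])) L)"
        unfolding 2 by (rule par_inst_subst[OF p_app.prems]) (use ms3(3) n3(2) in \<open>simp add: list_all2_appendI\<close>)
      ultimately show ?thesis by blast
    qed
  qed
next
  case (p_beta l As A L B Ms Ms1 N N1)
  have lm: "list_all2 (\<lambda>x y. par D x y \<and> (\<forall>z. par D x z \<longrightarrow> (\<exists>w. par D y w \<and> par D z w))) Ms Ms1"
    using p_beta.IH(1) by (rule list_all2_mono) (use p_beta.prems in auto)
  have len1: "length Ms1 = length As" using p_beta.hyps(2) list_all2_lengthD[OF p_beta.IH(1)] by simp
  show ?case
  proof (intro allI impI)
    fix t2 assume "par D (App (Lab l Ms) N) t2"
    then show "\<exists>t3. par D (subst (inst (Ms1 @ [N1])) L) t3 \<and> par D t2 t3"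
    proof (cases rule: par_AppE2)
      case (papp M2 N2)
      note 1 = papp
      obtain Ms2 where ms2: "M2 = Lab l Ms2" "list_all2 (par D) Ms Ms2" using 1 by (auto dest: par_lab_inv)
      from list_diamond[OF lm ms2(2)] obtain Ms3 where ms3: "list_all2 (par D) Ms1 Ms3" "list_all2 (par D) Ms2 Ms3" by blast
      obtain N3 where n3: "par D N1 N3" "par D N2 N3" using p_beta 1 by blast
      have len: "length Ms2 = length As" using list_all2_lengthD[OF ms2(2)] p_beta.hyps(2) by simp
      have "par D t2 (subst (inst (Ms3 @ [N3])) L)"
        unfolding 1 ms2(1) by (rule par.p_beta[OF p_beta.hyps(1) len ms3(2) n3(2)])
      moreover have "par D (subst (inst (Ms1 @ [N1])) L) (subst (inst (Ms3 @ [N3])) L)"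
        by (rule par_inst_subst[OF p_beta.prems]) (use ms3(1) n3(1) in \<open>simp add: list_all2_appendI\<close>)
      ultimately show ?thesis by blast
    next
      case (pbeta l' As' A' L' B' Ms' Ms2 N2)
      note 2 = pbeta
      have ll: "l' = l" "Ms' = Ms" using 2(1) by auto
      have eq: "(As', A', L', B') = (As, A, L, B)"
        using goodD_uniq[OF p_beta.prems] 2 p_beta.hyps(1) by auto
      from list_diamond[OF lm 2(4)[unfolded ll]] obtain Ms3 where ms3: "list_all2 (par D) Ms1 Ms3" "list_all2 (par D) Ms2 Ms3"
        using 2 by auto
      obtain N3 where n3: "par D N1 N3" "par D N2 N3" using p_beta 2 by blast
      have "par D t2 (subst (inst (Ms3 @ [N3])) L)"
        using eq 2 by simp (rule par_inst_subst[OF p_beta.prems], use ms3(2) n3(2) in \<open>simp add: list_all2_appendI\<close>)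
      moreover have "par D (subst (inst (Ms1 @ [N1])) L) (subst (inst (Ms3 @ [N3])) L)"
        by (rule par_inst_subst[OF p_beta.prems]) (use ms3(1) n3(1) in \<open>simp add: list_all2_appendI\<close>)
      ultimately show ?thesis by blast
    qed
  qed
qed

abbreviation pars :: "lctx \<Rightarrow> trm \<Rightarrow> trm \<Rightarrow> bool" where
  "pars D \<equiv> (par D)\<^sup>*\<^sup>*"

lemma strip: "pars D t t2 \<Longrightarrow> goodD D \<Longrightarrow> par D t t1 \<Longrightarrow> \<exists>t3. pars D t1 t3 \<and> par D t2 t3"
proof (induction arbitrary: t1 rule: rtranclp_induct)
  case base then show ?case by blast
next
  case (step y z)
  obtain u where u: "pars D t1 u" "par D y u" using step.IH[OF step.prems] by blast
  obtain w where "par D u w" "par D z w" using par_diamond[OF u(2) step.prems(1)] step.hyps(2) by blast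
  then show ?case using u by (meson rtranclp.rtrancl_into_rtrancl)
qed

lemma pars_confl: "pars D t t1 \<Longrightarrow> goodD D \<Longrightarrow> pars D t t2 \<Longrightarrow> \<exists>t3. pars D t1 t3 \<and> pars D t2 t3"
proof (induction arbitrary: t2 rule: rtranclp_induct)
  case base then show ?case by blast
next
  case (step y z)
  obtain u where u: "pars D y u" "pars D t2 u" using step.IH[OF step.prems] by blast
  obtain w where "pars D z w" "par D u w" using strip[OF u(1) step.prems(1) step.hyps(2)] by blast
  then show ?case using u by (meson rtranclp.rtrancl_into_rtrancl)
qed

lemma red_par: "red D t t' \<Longrightarrow> par D t t'"
  by (induction rule: red.induct) (auto intro!: par.intros par_refl list.rel_refl_strong)

lemma pars_pi: "pars D A A' \<Longrightarrow> pars D B B' \<Longrightarrow> pars D (Pi A B) (Pi A' B')"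
proof -
  assume a: "pars D A A'" and b: "pars D B B'"
  have "pars D (Pi A B) (Pi A' B)" using a
    by (induction rule: rtranclp_induct) (auto intro: rtranclp.rtrancl_into_rtrancl par.p_pi par_refl)
  moreover have "pars D (Pi A' B) (Pi A' B')" using b
    by (induction rule: rtranclp_induct) (auto intro: rtranclp.rtrancl_into_rtrancl par.p_pi par_refl)
  ultimately show ?thesis by simp
qed

lemma pars_app: "pars D A A' \<Longrightarrow> pars D B B' \<Longrightarrow> pars D (App A B) (App A' B')"
proof -
  assume a: "pars D A A'" and b: "pars D B B'"
  have "pars D (App A B) (App A' B)" using a
    by (induction rule: rtranclp_induct) (auto intro: rtranclp.rtrancl_into_rtrancl par.p_app par_refl)
  moreover have "pars D (App A' B) (App A' B')" using b
    by (induction rule: rtranclp_induct) (auto intro: rtranclp.rtrancl_into_rtrancl par.p_app par_refl)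
  ultimately show ?thesis by simp
qed

lemma pars_lab1: "pars D x y \<Longrightarrow> pars D (Lab l (pre @ x # post)) (Lab l (pre @ y # post))"
proof (induction rule: rtranclp_induct)
  case (step y z)
  have "par D (Lab l (pre @ y # post)) (Lab l (pre @ z # post))"
    by (rule par.p_lab) (auto intro!: list_all2_appendI list.rel_refl_strong par_refl step.hyps(2))
  then show ?case using step by (meson rtranclp.rtrancl_into_rtrancl)
qed simp

lemma pars_lab: "list_all2 (pars D) xs ys \<Longrightarrow> pars D (Lab l (pre @ xs)) (Lab l (pre @ ys))"
proof (induction xs arbitrary: ys pre)
  case Nil then show ?case by simp
next
  case (Cons x xs)
  obtain y ys' where ys: "ys = y # ys'" "pars D x y" "list_all2 (pars D) xs ys'"
    using Cons.prems by (cases ys) auto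
  have "pars D (Lab l (pre @ x # xs)) (Lab l (pre @ y # xs))" by (rule pars_lab1[OF ys(2)])
  moreover have "pars D (Lab l ((pre @ [y]) @ xs)) (Lab l ((pre @ [y]) @ ys'))" by (rule Cons.IH[OF ys(3)])
  ultimately show ?case using ys(1) by simp
qed

lemma reds_pars: "reds D t t' \<Longrightarrow> pars D t t'"
proof (induction rule: reds.induct)
  case (reds_step D M N) then show ?case using red_par by blast
next
  case (reds_lab D Ms Ms' l)
  have "list_all2 (pars D) Ms Ms'" using reds_lab by (rule list_all2_mono) auto
  then show ?case using pars_lab[of D Ms Ms' l "[]"] by simp
qed (auto intro: pars_pi pars_app)

lemma par_reds: "par D t t' \<Longrightarrow> reds D t t'"
proof (induction rule: par.induct)
  case (p_lab Ms Ms' l)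
  have "list_all2 (reds D) Ms Ms'" using p_lab by (rule list_all2_mono) auto
  then show ?case by (rule reds_lab)
next
  case (p_beta l As A L B Ms Ms' N N')
  have "list_all2 (reds D) Ms Ms'" using p_beta.IH(1) by (rule list_all2_mono) auto
  then have "reds D (App (Lab l Ms) N) (App (Lab l Ms') N')" using p_beta by (blast intro: reds.intros)
  moreover have "length Ms' = length As" using p_beta.hyps(2) list_all2_lengthD[OF p_beta.IH(1)] by simp
  then have "reds D (App (Lab l Ms') N') (subst (inst (Ms' @ [N'])) L)"
    using p_beta.hyps(1) by (blast intro: reds.intros red.intros)
  ultimately show ?case by (blast intro: reds.intros)
qed (auto intro: reds.intros)

lemma reds_eq: "reds D t t' = pars D t t'"
proof
  assume "pars D t t'" then show "reds D t t'"
    by (induction rule: rtranclp_induct) (auto intro: reds.intros par_reds)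
qed (rule reds_pars)

definition jn :: "lctx \<Rightarrow> trm \<Rightarrow> trm \<Rightarrow> bool" where
  "jn D a b = (\<exists>c. reds D a c \<and> reds D b c)"

lemma reds_confl: "goodD D \<Longrightarrow> reds D t t1 \<Longrightarrow> reds D t t2 \<Longrightarrow> jn D t1 t2"
  unfolding jn_def reds_eq using pars_confl by metis

lemma jn_sym: "jn D a b \<Longrightarrow> jn D b a" unfolding jn_def by blast

lemma jn_trans: "goodD D \<Longrightarrow> jn D a b \<Longrightarrow> jn D b c \<Longrightarrow> jn D a c"
  unfolding jn_def by (meson reds_confl[unfolded jn_def] reds_trans)

lemma jn_reds: "reds D a a' \<Longrightarrow> jn D a a'" unfolding jn_def by (blast intro: reds.intros)

lemma reds_subst: "goodD D \<Longrightarrow> reds D t t' \<Longrightarrow> reds D (subst \<sigma> t) (subst \<sigma> t')"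
  unfolding reds_eq
proof -
  assume g: "goodD D"
  show "pars D t t' \<Longrightarrow> pars D (subst \<sigma> t) (subst \<sigma> t')"
    by (induction rule: rtranclp_induct) (auto intro: rtranclp.rtrancl_into_rtrancl par_subst1 g)
qed

lemma jn_subst: "goodD D \<Longrightarrow> jn D t t' \<Longrightarrow> jn D (subst \<sigma> t) (subst \<sigma> t')"
  unfolding jn_def using reds_subst by blast

lemma pars_Univ: "pars D (Univ j) t \<Longrightarrow> t = Univ j"
  by (induction rule: rtranclp_induct) (auto elim: par_UnivE)

lemma pars_Var: "pars D (Var j) t \<Longrightarrow> t = Var j"
  by (induction rule: rtranclp_induct) (auto elim: par_VarE)

lemma pars_Pi: "pars D (Pi A B) t \<Longrightarrow> \<exists>A' B'. t = Pi A' B' \<and> pars D A A' \<and> pars D B B'"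
  by (induction rule: rtranclp_induct) (auto elim!: par_PiE intro: rtranclp.rtrancl_into_rtrancl)

lemma pars_Lab: "pars D (Lab l Ms) t \<Longrightarrow> \<exists>Ms'. t = Lab l Ms'"
  by (induction rule: rtranclp_induct) (auto elim!: par_LabE)

lemma pars_Lab_nil: "pars D (Lab l []) t \<Longrightarrow> t = Lab l []"
  by (induction rule: rtranclp_induct) (auto elim!: par_LabE)

lemma reds_Univ: "reds D (Univ j) t \<Longrightarrow> t = Univ j" using pars_Univ reds_eq by metis
lemma reds_Var: "reds D (Var j) t \<Longrightarrow> t = Var j" using pars_Var reds_eq by metis
lemma reds_Pi: "reds D (Pi A B) t \<Longrightarrow> \<exists>A' B'. t = Pi A' B' \<and> reds D A A' \<and> reds D B B'"
  using pars_Pi reds_eq by metis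
lemma reds_Lab: "reds D (Lab l Ms) t \<Longrightarrow> \<exists>Ms'. t = Lab l Ms'" using pars_Lab reds_eq by metis
lemma reds_Lab_nil: "reds D (Lab l []) t \<Longrightarrow> t = Lab l []" using pars_Lab_nil reds_eq by metis

lemma jn_Univ_Univ: "jn D (Univ i) (Univ j) \<Longrightarrow> i = j"
  unfolding jn_def by (auto dest!: reds_Univ)
lemma jn_Univ_Pi: "jn D (Univ i) (Pi A B) \<Longrightarrow> False"
  unfolding jn_def by (auto dest!: reds_Univ reds_Pi)
lemma jn_Univ_Lab: "jn D (Univ i) (Lab l Ms) \<Longrightarrow> False"
  unfolding jn_def by (auto dest!: reds_Univ reds_Lab)
lemma jn_Pi_Lab: "jn D (Pi A B) (Lab l Ms) \<Longrightarrow> False"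
  unfolding jn_def by (auto dest!: reds_Pi reds_Lab)
lemma jn_Lab_Lab: "jn D (Lab l Ms) (Lab l' Ms') \<Longrightarrow> l = l'"
  unfolding jn_def by (auto dest!: reds_Lab)
lemma jn_Pi_Pi: "jn D (Pi A B) (Pi A' B') \<Longrightarrow> jn D A A' \<and> jn D B B'"
  unfolding jn_def by (auto dest!: reds_Pi)

lemma red_mono: "red D t t' \<Longrightarrow> set D \<subseteq> set D' \<Longrightarrow> red D' t t'"
  by (induction rule: red.induct) (auto intro: red.intros)

lemma reds_mono: "reds D t t' \<Longrightarrow> set D \<subseteq> set D' \<Longrightarrow> reds D' t t'"
proof (induction rule: reds.induct)
  case (reds_lab D Ms Ms' l)
  have "list_all2 (reds D') Ms Ms'" using reds_lab.IH by (rule list_all2_mono) (use reds_lab.prems in auto)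
  then show ?case by (rule reds.reds_lab)
qed (auto intro: reds.intros red_mono)

lemma equiv_cases: "equiv D X Y \<Longrightarrow> set D \<subseteq> set D' \<Longrightarrow>
   jn D' X Y \<or> (\<exists>l Ns. l \<in> fst ` set D' \<and> (reds D' X (Lab l Ns) \<or> reds D' Y (Lab l Ns)))"
proof (induction rule: equiv.induct)
  case (eq_reduct D M L N) then show ?case unfolding jn_def using reds_mono by blast
next
  case (eq_eta1 D L l Ns M M' As A N B)
  then have "l \<in> fst ` set D'" by force
  then show ?case using eq_eta1 reds_mono by blast
next
  case (eq_eta2 D L l Ns M M' As A N B)
  then have "l \<in> fst ` set D'" by force
  then show ?case using eq_eta2 reds_mono by blast
qed

inductive tyR :: "lctx \<Rightarrow> nat \<Rightarrow> (nat \<Rightarrow> trm \<Rightarrow> bool) \<Rightarrow> nat \<Rightarrow> trm \<Rightarrow> (trm \<Rightarrow> bool) \<Rightarrow> bool"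
  for D :: lctx and c :: nat and U :: "nat \<Rightarrow> trm \<Rightarrow> bool" and i :: nat where
  r_univ: "reds D T (Univ j) \<Longrightarrow> j < i \<Longrightarrow> tyR D c U i T (U j)"
| r_pi: "reds D T (Pi A B) \<Longrightarrow> tyR D c U i A PA \<Longrightarrow>
    (\<forall>a. PA a \<longrightarrow> tyR D c U i (subst (inst [a]) B) (PB a)) \<Longrightarrow>
    tyR D c U i T (\<lambda>f. \<forall>a. PA a \<longrightarrow> PB a (App f a))"
| r_opq: "reds D T (Lab c []) \<Longrightarrow> tyR D c U i T (\<lambda>_. False)"

lemma tyR_bw: "tyR D c U i T P \<Longrightarrow> reds D T0 T \<Longrightarrow> tyR D c U i T0 P"
  by (erule tyR.cases) (auto intro: tyR.intros reds_trans)

lemma tyR_fw: "tyR D c U i T P \<Longrightarrow> goodD D \<Longrightarrow> (\<forall>T'. reds D T T' \<longrightarrow> tyR D c U i T' P)"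
proof (induction rule: tyR.induct)
  case (r_univ T j)
  show ?case
  proof (intro allI impI)
    fix T' assume "reds D T T'"
    then obtain X where "reds D (Univ j) X" "reds D T' X" using reds_confl[OF r_univ.prems r_univ.hyps(1)] jn_def by metis
    then have "reds D T' (Univ j)" using reds_Univ by metis
    then show "tyR D c U i T' (U j)" using r_univ by (blast intro: tyR.intros)
  qed
next
  case (r_pi T A B PA PB)
  show ?case
  proof (intro allI impI)
    fix T' assume "reds D T T'"
    then obtain X where "reds D (Pi A B) X" "reds D T' X" using reds_confl[OF r_pi.prems r_pi.hyps(1)] jn_def by metis
    then obtain A2 B2 where x: "reds D T' (Pi A2 B2)" "reds D A A2" "reds D B B2" using reds_Pi by metis
    have "tyR D c U i A2 PA" using r_pi x by blast
    moreover have "\<forall>a. PA a \<longrightarrow> tyR D c U i (subst (inst [a]) B2) (PB a)"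
      using r_pi x reds_subst by blast
    ultimately show "tyR D c U i T' (\<lambda>f. \<forall>a. PA a \<longrightarrow> PB a (App f a))" by (rule tyR.r_pi[OF x(1)])
  qed
next
  case (r_opq T)
  show ?case
  proof (intro allI impI)
    fix T' assume "reds D T T'"
    then obtain X where "reds D (Lab c []) X" "reds D T' X" using reds_confl[OF r_opq.prems r_opq.hyps(1)] jn_def by metis
    then have "reds D T' (Lab c [])" using reds_Lab_nil by metis
    then show "tyR D c U i T' (\<lambda>_. False)" by (rule tyR.r_opq)
  qed
qed

lemma jn_heads: "goodD D \<Longrightarrow> reds D T H1 \<Longrightarrow> reds D T' H2 \<Longrightarrow> jn D T T' \<Longrightarrow> jn D H1 H2"
  by (meson jn_reds jn_sym jn_trans)

lemma tyR_fun: "tyR D c U i T P \<Longrightarrow> goodD D \<Longrightarrow> (\<forall>T' Q. tyR D c U i T' Q \<longrightarrow> jn D T T' \<longrightarrow> P = Q)"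
proof (induction rule: tyR.induct)
  case (r_univ T j)
  show ?case
  proof (intro allI impI)
    fix T' Q assume t': "tyR D c U i T' Q" and j: "jn D T T'"
    from t' show "U j = Q"
    proof cases
      case (r_univ j') then show ?thesis using jn_heads[OF r_univ.prems r_univ.hyps(1) _ j] jn_Univ_Univ by blast
    next
      case (r_pi A B PA PB) then show ?thesis using jn_heads[OF r_univ.prems r_univ.hyps(1) _ j] jn_Univ_Pi by blast
    next
      case r_opq then show ?thesis using jn_heads[OF r_univ.prems r_univ.hyps(1) _ j] jn_Univ_Lab by blast
    qed
  qed
next
  case (r_pi T A B PA PB)
  note o_h = r_pi.hyps and o_g = r_pi.prems and o_ih = r_pi.IH
  show ?case
  proof (intro allI impI)
    fix T' Q assume t': "tyR D c U i T' Q" and j: "jn D T T'"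
    from t' show "(\<lambda>f. \<forall>a. PA a \<longrightarrow> PB a (App f a)) = Q"
    proof cases
      case (r_univ j') then show ?thesis using jn_heads[OF r_pi.prems r_pi.hyps(1) _ j] jn_Univ_Pi jn_sym by blast
    next
      case (r_pi A' B' PA' PB')
      note inn = r_pi
      have hj: "jn D (Pi A B) (Pi A' B')" using jn_heads[OF o_g o_h(1) inn(2) j] .
      then have ja: "jn D A A'" and jb: "jn D B B'" using jn_Pi_Pi by blast+
      have pa: "PA = PA'" using o_ih o_g inn(3) ja by blast
      have "\<forall>a. PA a \<longrightarrow> PB a = PB' a"
      proof (intro allI impI)
        fix a assume "PA a"
        moreover have "jn D (subst (inst [a]) B) (subst (inst [a]) B')" using jn_subst[OF o_g jb] .
        ultimately show "PB a = PB' a" using o_ih o_g inn(4) pa by blast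
      qed
      then show ?thesis using inn(1) pa by (auto simp: fun_eq_iff)
    next
      case r_opq then show ?thesis using jn_heads[OF r_pi.prems r_pi.hyps(1) _ j] jn_Pi_Lab by blast
    qed
  qed
next
  case (r_opq T)
  show ?case
  proof (intro allI impI)
    fix T' Q assume t': "tyR D c U i T' Q" and j: "jn D T T'"
    from t' show "(\<lambda>_. False) = Q"
    proof cases
      case (r_univ j') then show ?thesis using jn_heads[OF r_opq.prems r_opq.hyps(1) _ j] jn_Univ_Lab jn_sym by blast
    next
      case (r_pi A' B' PA' PB') then show ?thesis using jn_heads[OF r_opq.prems r_opq.hyps(1) _ j] jn_Pi_Lab jn_sym by blast
    next
      case r_opq then show ?thesis by simp
    qed
  qed
qed

lemma tyR_mono: "tyR D c U i T P \<Longrightarrow> i \<le> i' \<Longrightarrow> (\<forall>j<i. U' j = U j) \<Longrightarrow> tyR D c U' i' T P"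
proof (induction rule: tyR.induct)
  case (r_univ T j)
  then have "tyR D c U' i' T (U' j)" by (intro tyR.r_univ) auto
  then show ?case using r_univ by simp
qed (auto intro: tyR.intros)

lemma tyR_bwP: "tyR D c U i T P \<Longrightarrow> (\<forall>j t t'. U j t' \<longrightarrow> reds D t t' \<longrightarrow> U j t) \<Longrightarrow>
   (\<forall>t t'. P t' \<longrightarrow> reds D t t' \<longrightarrow> P t)"
proof (induction rule: tyR.induct)
  case (r_pi T A B PA PB)
  then show ?case by (blast intro: reds_app reds_refl)
qed auto

lemma tyR_lab_contra: "tyR D c U i T P \<Longrightarrow> goodD D \<Longrightarrow> c \<notin> fst ` set D \<Longrightarrow>
   reds D T (Lab l Ns) \<Longrightarrow> l \<in> fst ` set D \<Longrightarrow> False"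
proof (induction rule: tyR.cases)
  case (r_univ j) then show ?case using reds_confl jn_Univ_Lab by blast
next
  case (r_pi A B PA PB) then show ?case using reds_confl jn_Pi_Lab by blast
next
  case r_opq then show ?case using reds_confl jn_Lab_Lab by metis
qed

primrec Us :: "lctx \<Rightarrow> nat \<Rightarrow> nat \<Rightarrow> nat \<Rightarrow> trm \<Rightarrow> bool" where
  "Us D c 0 = (\<lambda>j t. False)"
| "Us D c (Suc n) = (\<lambda>j t. if j < n then Us D c n j t else j = n \<and> (\<exists>Q. tyR D c (Us D c n) n t Q))"

definition ty :: "lctx \<Rightarrow> nat \<Rightarrow> nat \<Rightarrow> trm \<Rightarrow> (trm \<Rightarrow> bool) \<Rightarrow> bool" where
  "ty D c i T P = tyR D c (Us D c i) i T P"

lemma Us_eq: "Us D c n j t = (j < n \<and> (\<exists>Q. ty D c j t Q))"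
  by (induction n) (auto simp: ty_def less_Suc_eq)

lemma ty_mono: "ty D c i T P \<Longrightarrow> i \<le> k \<Longrightarrow> ty D c k T P"
  unfolding ty_def by (erule tyR_mono) (auto simp: Us_eq fun_eq_iff)

lemma ty_fun: "goodD D \<Longrightarrow> ty D c i T P \<Longrightarrow> ty D c k T' Q \<Longrightarrow> jn D T T' \<Longrightarrow> P = Q"
proof -
  assume g: "goodD D" and a: "ty D c i T P" and b: "ty D c k T' Q" and j: "jn D T T'"
  have "ty D c (max i k) T P" "ty D c (max i k) T' Q" using a b ty_mono by auto
  then show "P = Q" using tyR_fun[of D c _ _ T P] g j unfolding ty_def by blast
qed

lemma ty_bw: "ty D c i T P \<Longrightarrow> reds D T0 T \<Longrightarrow> ty D c i T0 P"
  unfolding ty_def by (rule tyR_bw)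

lemma ty_fw: "goodD D \<Longrightarrow> ty D c i T P \<Longrightarrow> reds D T T' \<Longrightarrow> ty D c i T' P"
  unfolding ty_def using tyR_fw by blast

lemma ty_bwP: "ty D c i T P \<Longrightarrow> P t' \<Longrightarrow> reds D t t' \<Longrightarrow> P t"
proof -
  assume a: "ty D c i T P" "P t'" "reds D t t'"
  have "\<forall>j t t'. Us D c i j t' \<longrightarrow> reds D t t' \<longrightarrow> Us D c i j t"
    by (auto simp: Us_eq intro: ty_bw)
  then show "P t" using tyR_bwP[of D c "Us D c i" i T P] a unfolding ty_def by blast
qed

lemma ty_lab_contra: "ty D c i T P \<Longrightarrow> goodD D \<Longrightarrow> c \<notin> fst ` set D \<Longrightarrow>
   reds D T (Lab l Ns) \<Longrightarrow> l \<in> fst ` set D \<Longrightarrow> False"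
  unfolding ty_def by (rule tyR_lab_contra)

lemma ty_Univ: assumes "ty D c k (Univ i) P" shows "P = (\<lambda>t. \<exists>Q. ty D c i t Q)"
  using assms[unfolded ty_def]
  by (cases rule: tyR.cases) (auto dest!: reds_Univ simp: Us_eq fun_eq_iff)

lemma ty_Pi: assumes "ty D c k (Pi X Y) P"
  shows "\<exists>A1 B1 PA PB. reds D X A1 \<and> reds D Y B1 \<and> ty D c k A1 PA \<and>
   (\<forall>a. PA a \<longrightarrow> ty D c k (subst (inst [a]) B1) (PB a)) \<and> P = (\<lambda>f. \<forall>a. PA a \<longrightarrow> PB a (App f a))"
  using assms[unfolded ty_def]
  by (cases rule: tyR.cases) (auto dest!: reds_Pi reds_Lab_nil reds_Univ simp: ty_def)

lemma typing_good:
  "typing \<Delta> \<Gamma> M T \<Longrightarrow> cl (length \<Gamma>) M \<and> goodD \<Delta> \<and> ctxOK \<Gamma>"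
  "wf \<Delta> \<Gamma> \<Longrightarrow> goodD \<Delta> \<and> ctxOK \<Gamma>"
proof (induction rule: typing_wf.inducts)
  case (wf_empty) then show ?case by (simp add: goodD_def ctxOK_def)
next
  case (wf_label \<Delta> As A B i M l)
  then show ?case by (auto simp: goodD_def ctxOK_def)
next
  case (wf_cons \<Delta> \<Gamma> A i)
  have "ctxOK (A # \<Gamma>)"
    unfolding ctxOK_def
  proof (intro allI impI)
    fix k assume "k < length (A # \<Gamma>)"
    then show "cl (length (A # \<Gamma>) - Suc k) ((A # \<Gamma>) ! k)"
      using wf_cons by (cases k) (auto simp: ctxOK_def)
  qed
  then show ?case using wf_cons by simp
next
  case (t_lab \<Delta> \<Gamma> l As A L B Ms)
  then show ?case by (auto simp: in_set_conv_nth)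
qed auto

lemma ren_id: "ren (\<lambda>j. j) t = t"
proof (induction t)
  case (Pi A B)
  have "(\<lambda>n. case n of 0 \<Rightarrow> 0 | Suc k \<Rightarrow> Suc k) = (\<lambda>j. j)" by (auto simp: fun_eq_iff split: nat.split)
  then show ?case using Pi by simp
qed (auto simp: map_idI)

lemma lift0: "lift 0 t = t" by (simp add: lift_def ren_id)

lemma subst_inst1: "subst \<sigma> (subst (inst [N]) B) = subst (inst [subst \<sigma> N]) (subst (up \<sigma>) B)"
proof -
  have e: "subst \<sigma> \<circ> inst [N] = scons (subst \<sigma> N) \<sigma>"
    by (auto simp: fun_eq_iff inst_def scons_def split: nat.split)
  have "subst \<sigma> (subst (inst [N]) B) = subst (scons (subst \<sigma> N) \<sigma>) B" by (simp only: subst_subst e)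
  then show ?thesis by (simp only: inst_single_up)
qed

locale FL =
  fixes D0 :: lctx and c :: nat
  assumes g0: "goodD D0" and c0: "c \<notin> fst ` set D0"
begin

definition sem :: "trm \<Rightarrow> (trm \<Rightarrow> bool) \<Rightarrow> bool" where
  "sem T P = (\<exists>i. ty D0 c i T P)"

definition valid :: "(nat \<Rightarrow> trm) \<Rightarrow> tctx \<Rightarrow> bool" where
  "valid \<sigma> \<Gamma> = (\<forall>k<length \<Gamma>. \<exists>P. sem (subst \<sigma> (lift (Suc k) (\<Gamma>!k))) P \<and> P (\<sigma> k))"

definition labOK :: "trm list \<Rightarrow> trm \<Rightarrow> trm \<Rightarrow> trm \<Rightarrow> bool" where
  "labOK As A L B = ((\<forall>\<sigma>. valid \<sigma> (rev As) \<longrightarrow> (\<exists>i Q. ty D0 c i (subst \<sigma> (Pi A B)) Q)) \<and>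
     (\<forall>\<sigma>. valid \<sigma> (A # rev As) \<longrightarrow> (\<exists>P. sem (subst \<sigma> B) P \<and> P (subst \<sigma> L))))"

definition labsOK :: "lctx \<Rightarrow> bool" where
  "labsOK \<Delta> = (\<forall>l As A L B. (l,As,A,L,B) \<in> set \<Delta> \<longrightarrow> labOK As A L B)"

lemma valid_cons: "valid \<sigma> \<Gamma> \<Longrightarrow> sem (subst \<sigma> A) P \<Longrightarrow> P a \<Longrightarrow> valid (scons a \<sigma>) (A # \<Gamma>)"
  unfolding valid_def
proof (intro allI impI)
  fix k assume v: "\<forall>k<length \<Gamma>. \<exists>P. sem (subst \<sigma> (lift (Suc k) (\<Gamma> ! k))) P \<and> P (\<sigma> k)"
    and s: "sem (subst \<sigma> A) P" and p: "P a" and k: "k < length (A # \<Gamma>)"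
  show "\<exists>P. sem (subst (scons a \<sigma>) (lift (Suc k) ((A # \<Gamma>) ! k))) P \<and> P (scons a \<sigma> k)"
  proof (cases k)
    case 0
    have "subst (scons a \<sigma>) (lift (Suc 0) A) = subst \<sigma> A" using subst_lift1_scons[of a \<sigma> 0 A] lift0 by simp
    moreover have "scons a \<sigma> 0 = a" by (simp add: scons_def)
    ultimately show ?thesis using s p 0 by auto
  next
    case (Suc k')
    have "subst (scons a \<sigma>) (lift (Suc (Suc k')) (\<Gamma>!k')) = subst \<sigma> (lift (Suc k') (\<Gamma>!k'))"
      by (rule subst_lift1_scons)
    moreover have "scons a \<sigma> (Suc k') = \<sigma> k'" by (simp add: scons_def)
    ultimately show ?thesis using v k Suc by auto
  qed
qed

lemma sem_fun: "sem T P \<Longrightarrow> sem T' Q \<Longrightarrow> jn D0 T T' \<Longrightarrow> P = Q"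
  unfolding sem_def using ty_fun[OF g0] by blast

lemma conv_sound: "equiv \<Delta> A B \<Longrightarrow> set \<Delta> \<subseteq> set D0 \<Longrightarrow> sem (subst \<sigma> A) P \<Longrightarrow> sem (subst \<sigma> B) Q \<Longrightarrow> P = Q"
proof -
  assume e: "equiv \<Delta> A B" and s: "set \<Delta> \<subseteq> set D0" and a: "sem (subst \<sigma> A) P" and b: "sem (subst \<sigma> B) Q"
  from equiv_cases[OF e s] show "P = Q"
  proof
    assume "jn D0 A B"
    then have "jn D0 (subst \<sigma> A) (subst \<sigma> B)" by (rule jn_subst[OF g0])
    then show ?thesis using sem_fun a b by blast
  next
    assume "\<exists>l Ns. l \<in> fst ` set D0 \<and> (reds D0 A (Lab l Ns) \<or> reds D0 B (Lab l Ns))"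
    then obtain l Ns where l: "l \<in> fst ` set D0" and r: "reds D0 A (Lab l Ns) \<or> reds D0 B (Lab l Ns)" by blast
    from r show ?thesis
    proof
      assume "reds D0 A (Lab l Ns)"
      then have "reds D0 (subst \<sigma> A) (Lab l (map (subst \<sigma>) Ns))" using reds_subst[OF g0] by fastforce
      then show ?thesis using a l ty_lab_contra[OF _ g0 c0] unfolding sem_def by blast
    next
      assume "reds D0 B (Lab l Ns)"
      then have "reds D0 (subst \<sigma> B) (Lab l (map (subst \<sigma>) Ns))" using reds_subst[OF g0] by fastforce
      then show ?thesis using b l ty_lab_contra[OF _ g0 c0] unfolding sem_def by blast
    qed
  qed
qed

lemma sem_Univ: "sem (Univ i) P \<Longrightarrow> P = (\<lambda>t. \<exists>Q. ty D0 c i t Q)"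
  unfolding sem_def using ty_Univ by blast

lemma ty_Univ_intro: "i < k \<Longrightarrow> ty D0 c k (Univ i) (\<lambda>t. \<exists>Q. ty D0 c i t Q)"
proof -
  assume "i < k"
  then have "ty D0 c k (Univ i) (Us D0 c k i)" unfolding ty_def by (intro tyR.r_univ reds_refl)
  moreover have "Us D0 c k i = (\<lambda>t. \<exists>Q. ty D0 c i t Q)" using \<open>i < k\<close> by (simp add: fun_eq_iff Us_eq)
  ultimately show ?thesis by simp
qed

end

context FL begin

lemma valid_inst:
  assumes ctx: "ctxOK (rev As)" and len: "length Ms = length As"
    and h: "\<forall>k<length Ms. \<exists>P. sem (subst \<sigma> (subst (inst (take k Ms)) (As!k))) P \<and> P (subst \<sigma> (Ms!k))"
  shows "valid (inst (map (subst \<sigma>) Ms)) (rev As)"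
  unfolding valid_def
proof (intro allI impI)
  fix m assume m: "m < length (rev As)"
  let ?n = "length As"
  let ?k = "?n - Suc m"
  let ?Ms' = "map (subst \<sigma>) Ms"
  have mn: "m < ?n" using m by simp
  have kn: "?k < ?n" using mn by simp
  have ra: "rev As ! m = As ! ?k" using mn by (simp add: rev_nth)
  have clk: "cl ?k (As ! ?k)" using ctx m ra unfolding ctxOK_def by auto
  have lt: "length (take ?k Ms) = ?k" using len kn by simp
  have e1: "subst (inst ?Ms') (lift (Suc m) (As ! ?k)) = subst \<sigma> (subst (inst (take ?k Ms)) (As ! ?k))"
  proof -
    have "subst \<sigma> (subst (inst (take ?k Ms)) (As ! ?k)) = subst (inst (map (subst \<sigma>) (take ?k Ms))) (As ! ?k)"
      by (rule subst_inst_closed) (use clk lt in simp)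
    moreover have "subst (inst ?Ms') (lift (Suc m) (As ! ?k)) = subst (inst ?Ms' \<circ> (\<lambda>j. j + Suc m)) (As ! ?k)"
      by (simp add: lift_def subst_ren)
    moreover have "subst (inst ?Ms' \<circ> (\<lambda>j. j + Suc m)) (As ! ?k) = subst (inst (map (subst \<sigma>) (take ?k Ms))) (As ! ?k)"
    proof (rule cl_subst_eq[OF clk], intro allI impI)
      fix p assume p: "p < ?k"
      have a1: "p + Suc m < length Ms" using p len mn by simp
      have a2: "length Ms - Suc (p + Suc m) = ?k - Suc p" using p len by simp
      have a3: "?k - Suc p < ?k" using p by simp
      show "(inst ?Ms' \<circ> (\<lambda>j. j + Suc m)) p = inst (map (subst \<sigma>) (take ?k Ms)) p"
        using a1 a2 a3 p lt kn len by (simp add: inst_def rev_nth)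
    qed
    ultimately show ?thesis by simp
  qed
  have e2: "inst ?Ms' m = subst \<sigma> (Ms ! ?k)" using mn len by (simp add: inst_def rev_nth)
  obtain P where "sem (subst \<sigma> (subst (inst (take ?k Ms)) (As!?k))) P" "P (subst \<sigma> (Ms!?k))"
    using h kn len by auto
  then show "\<exists>P. sem (subst (inst ?Ms') (lift (Suc m) (rev As ! m))) P \<and> P (inst ?Ms' m)"
    using e1 e2 ra by auto
qed

end

context FL begin

lemma fund:
  "typing \<Delta> \<Gamma> M T \<Longrightarrow> set \<Delta> \<subseteq> set D0 \<Longrightarrow>
     labsOK \<Delta> \<and> (\<forall>\<sigma>. valid \<sigma> \<Gamma> \<longrightarrow> (\<exists>P. sem (subst \<sigma> T) P \<and> P (subst \<sigma> M)))"
  "wf \<Delta> \<Gamma> \<Longrightarrow> set \<Delta> \<subseteq> set D0 \<Longrightarrow> labsOK \<Delta>"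
proof (induction rule: typing_wf.inducts)
  case (t_var \<Delta> \<Gamma> i)
  then show ?case by (auto simp: valid_def)
next
  case (t_univ \<Delta> \<Gamma> i)
  have "ty D0 c (Suc (Suc i)) (Univ (Suc i)) (\<lambda>t. \<exists>Q. ty D0 c (Suc i) t Q)" by (rule ty_Univ_intro) simp
  moreover have "ty D0 c (Suc i) (Univ i) (\<lambda>t. \<exists>Q. ty D0 c i t Q)" by (rule ty_Univ_intro) simp
  ultimately show ?case using t_univ by (auto simp: sem_def)
next
  case (t_pi \<Delta> \<Gamma> A i B j)
  have lab: "labsOK \<Delta>" using t_pi by blast
  have ihA: "\<And>\<sigma>. valid \<sigma> \<Gamma> \<Longrightarrow> \<exists>Q. ty D0 c i (subst \<sigma> A) Q"
    using t_pi.IH(1) t_pi.prems sem_Univ by fastforce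
  have ihB: "\<And>\<sigma>. valid \<sigma> (A # \<Gamma>) \<Longrightarrow> \<exists>Q. ty D0 c j (subst \<sigma> B) Q"
    using t_pi.IH(2) t_pi.prems sem_Univ by fastforce
  let ?m = "max i j"
  have "\<forall>\<sigma>. valid \<sigma> \<Gamma> \<longrightarrow> (\<exists>P. sem (subst \<sigma> (Univ ?m)) P \<and> P (subst \<sigma> (Pi A B)))"
  proof (intro allI impI)
    fix \<sigma> assume v: "valid \<sigma> \<Gamma>"
    obtain QA where qa: "ty D0 c i (subst \<sigma> A) QA" using ihA[OF v] by blast
    define PB where "PB = (\<lambda>a. SOME Q. ty D0 c ?m (subst (inst [a]) (subst (up \<sigma>) B)) Q)"
    have pb: "\<forall>a. QA a \<longrightarrow> ty D0 c ?m (subst (inst [a]) (subst (up \<sigma>) B)) (PB a)"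
    proof (intro allI impI)
      fix a assume "QA a"
      then have "valid (scons a \<sigma>) (A # \<Gamma>)" using valid_cons[OF v] qa sem_def by blast
      then obtain Q where "ty D0 c j (subst (scons a \<sigma>) B) Q" using ihB by blast
      then have "ty D0 c ?m (subst (inst [a]) (subst (up \<sigma>) B)) Q" using ty_mono by (simp add: inst_single_up)
      then show "ty D0 c ?m (subst (inst [a]) (subst (up \<sigma>) B)) (PB a)" unfolding PB_def by (metis someI)
    qed
    have qa': "ty D0 c ?m (subst \<sigma> A) QA" using qa ty_mono by simp
    have "ty D0 c ?m (Pi (subst \<sigma> A) (subst (up \<sigma>) B)) (\<lambda>f. \<forall>a. QA a \<longrightarrow> PB a (App f a))"
      using qa' pb unfolding ty_def by (intro tyR.r_pi[OF reds_refl]) auto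
    moreover have "ty D0 c (Suc ?m) (Univ ?m) (\<lambda>t. \<exists>Q. ty D0 c ?m t Q)" by (rule ty_Univ_intro) simp
    ultimately show "\<exists>P. sem (subst \<sigma> (Univ ?m)) P \<and> P (subst \<sigma> (Pi A B))"
      unfolding sem_def by auto
  qed
  then show ?case using lab by blast
next
  case (t_app \<Delta> \<Gamma> M A B N)
  have IH1: "labsOK \<Delta> \<and> (\<forall>\<sigma>. valid \<sigma> \<Gamma> \<longrightarrow> (\<exists>P. sem (subst \<sigma> (Pi A B)) P \<and> P (subst \<sigma> M)))"
    using t_app.IH(1) t_app.prems by simp
  have IH2: "\<forall>\<sigma>. valid \<sigma> \<Gamma> \<longrightarrow> (\<exists>P. sem (subst \<sigma> A) P \<and> P (subst \<sigma> N))"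
    using t_app.IH(2) t_app.prems by simp
  have lab: "labsOK \<Delta>" using IH1 by simp
  have "\<forall>\<sigma>. valid \<sigma> \<Gamma> \<longrightarrow> (\<exists>P. sem (subst \<sigma> (subst (inst [N]) B)) P \<and> P (subst \<sigma> (App M N)))"
  proof (intro allI impI)
    fix \<sigma> assume v: "valid \<sigma> \<Gamma>"
    obtain P where p0: "sem (subst \<sigma> (Pi A B)) P" "P (subst \<sigma> M)"
      using IH1 v by blast
    then have p: "sem (Pi (subst \<sigma> A) (subst (up \<sigma>) B)) P" by simp
    then obtain k where "ty D0 c k (Pi (subst \<sigma> A) (subst (up \<sigma>) B)) P" unfolding sem_def by blast
    from ty_Pi[OF this] obtain A1 B1 PA PB where x: "reds D0 (subst \<sigma> A) A1" "reds D0 (subst (up \<sigma>) B) B1"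
       "ty D0 c k A1 PA" "\<forall>a. PA a \<longrightarrow> ty D0 c k (subst (inst [a]) B1) (PB a)"
       "P = (\<lambda>f. \<forall>a. PA a \<longrightarrow> PB a (App f a))" by blast
    obtain P' where p': "sem (subst \<sigma> A) P'" "P' (subst \<sigma> N)" using IH2 v by blast
    have sA1: "sem A1 PA" using x(3) unfolding sem_def by blast
    have "P' = PA" by (rule sem_fun[OF p'(1) sA1 jn_reds[OF x(1)]])
    then have pa: "PA (subst \<sigma> N)" using p' by simp
    then have r: "PB (subst \<sigma> N) (App (subst \<sigma> M) (subst \<sigma> N))" using p0(2) x(5) by simp
    have t: "ty D0 c k (subst (inst [subst \<sigma> N]) B1) (PB (subst \<sigma> N))" using x(4) pa by blast
    have "reds D0 (subst \<sigma> (subst (inst [N]) B)) (subst (inst [subst \<sigma> N]) B1)"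
      unfolding subst_inst1 by (rule reds_subst[OF g0 x(2)])
    then have "ty D0 c k (subst \<sigma> (subst (inst [N]) B)) (PB (subst \<sigma> N))" using t ty_bw by blast
    then show "\<exists>P. sem (subst \<sigma> (subst (inst [N]) B)) P \<and> P (subst \<sigma> (App M N))"
      using r unfolding sem_def by auto
  qed
  then show ?case using lab by blast
next
  case (t_conv \<Delta> \<Gamma> M A B i)
  have IH1: "labsOK \<Delta> \<and> (\<forall>\<sigma>. valid \<sigma> \<Gamma> \<longrightarrow> (\<exists>P. sem (subst \<sigma> A) P \<and> P (subst \<sigma> M)))"
    using t_conv.IH(1) t_conv.prems by simp
  have IH2: "\<forall>\<sigma>. valid \<sigma> \<Gamma> \<longrightarrow> (\<exists>P. sem (Univ i) P \<and> P (subst \<sigma> B))"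
    using t_conv.IH(2) t_conv.prems by simp
  have lab: "labsOK \<Delta>" using IH1 by simp
  have "\<forall>\<sigma>. valid \<sigma> \<Gamma> \<longrightarrow> (\<exists>P. sem (subst \<sigma> B) P \<and> P (subst \<sigma> M))"
  proof (intro allI impI)
    fix \<sigma> assume v: "valid \<sigma> \<Gamma>"
    obtain P where p: "sem (subst \<sigma> A) P" "P (subst \<sigma> M)" using IH1 v by blast
    obtain PU where pu: "sem (Univ i) PU" "PU (subst \<sigma> B)" using IH2 v by blast
    have "PU = (\<lambda>t. \<exists>Q. ty D0 c i t Q)" by (rule sem_Univ[OF pu(1)])
    then obtain Q where q: "ty D0 c i (subst \<sigma> B) Q" using pu(2) by auto
    then have q': "sem (subst \<sigma> B) Q" unfolding sem_def by blast
    have "P = Q" by (rule conv_sound[OF t_conv.hyps(2) t_conv.prems p(1) q'])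
    then show "\<exists>P. sem (subst \<sigma> B) P \<and> P (subst \<sigma> M)" using p q' by auto
  qed
  then show ?case using lab by blast
next
  case (t_lab \<Delta> \<Gamma> l As A L B Ms)
  have lab: "labsOK \<Delta>" using t_lab.IH(1) t_lab.prems by simp
  have inD0: "(l, As, A, L, B) \<in> set D0" using t_lab.hyps(2) t_lab.prems by blast
  have ent: "cl (Suc (length As)) L" "cl (length As) (Pi A B)" "ctxOK (rev As)"
    using goodD_entry[OF g0 inD0] by auto
  have lo: "labOK As A L B" using lab t_lab.hyps(2) unfolding labsOK_def by blast
  have len: "length Ms = length As" by (rule t_lab.hyps(3))
  have IHk: "\<And>k. k < length Ms \<Longrightarrow> (\<forall>\<sigma>. valid \<sigma> \<Gamma> \<longrightarrow> (\<exists>P. sem (subst \<sigma> (subst (inst (take k Ms)) (As!k))) P \<and> P (subst \<sigma> (Ms!k))))"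
  proof -
    fix k assume "k < length Ms"
    then have "set \<Delta> \<subseteq> set D0 \<longrightarrow> labsOK \<Delta> \<and> (\<forall>\<sigma>. valid \<sigma> \<Gamma> \<longrightarrow> (\<exists>P. sem (subst \<sigma> (subst (inst (take k Ms)) (As!k))) P \<and> P (subst \<sigma> (Ms!k))))"
      using t_lab.IH(2) by blast
    then show "\<forall>\<sigma>. valid \<sigma> \<Gamma> \<longrightarrow> (\<exists>P. sem (subst \<sigma> (subst (inst (take k Ms)) (As!k))) P \<and> P (subst \<sigma> (Ms!k)))"
      using t_lab.prems by blast
  qed
  have "\<forall>\<sigma>. valid \<sigma> \<Gamma> \<longrightarrow> (\<exists>P. sem (subst \<sigma> (subst (inst Ms) (Pi A B))) P \<and> P (subst \<sigma> (Lab l Ms)))"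
  proof (intro allI impI)
    fix \<sigma> assume v: "valid \<sigma> \<Gamma>"
    let ?Ms' = "map (subst \<sigma>) Ms"
    have h: "\<forall>k<length Ms. \<exists>P. sem (subst \<sigma> (subst (inst (take k Ms)) (As!k))) P \<and> P (subst \<sigma> (Ms!k))"
      using IHk v by blast
    have vi: "valid (inst ?Ms') (rev As)" by (rule valid_inst[OF ent(3) len h])
    have eqT: "subst \<sigma> (subst (inst Ms) (Pi A B)) = subst (inst ?Ms') (Pi A B)"
      by (rule subst_inst_closed) (use ent(2) len in simp)
    obtain i Q where q: "ty D0 c i (subst (inst ?Ms') (Pi A B)) Q" using lo vi unfolding labOK_def by blast
    then have q2: "ty D0 c i (Pi (subst (inst ?Ms') A) (subst (up (inst ?Ms')) B)) Q" by simp
    from ty_Pi[OF q2] obtain A1 B1 PA PB where x: "reds D0 (subst (inst ?Ms') A) A1" "reds D0 (subst (up (inst ?Ms')) B) B1"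
       "ty D0 c i A1 PA" "\<forall>a. PA a \<longrightarrow> ty D0 c i (subst (inst [a]) B1) (PB a)"
       "Q = (\<lambda>f. \<forall>a. PA a \<longrightarrow> PB a (App f a))" by blast
    have "\<forall>a. PA a \<longrightarrow> PB a (App (Lab l ?Ms') a)"
    proof (intro allI impI)
      fix a assume pa: "PA a"
      have sA: "sem (subst (inst ?Ms') A) PA" using ty_bw[OF x(3) x(1)] unfolding sem_def by blast
      have "valid (inst (?Ms' @ [a])) (A # rev As)"
        unfolding inst_snoc by (rule valid_cons[OF vi sA pa])
      then obtain P where p: "sem (subst (inst (?Ms' @ [a])) B) P" "P (subst (inst (?Ms' @ [a])) L)"
        using lo unfolding labOK_def by blast
      have "subst (inst (?Ms' @ [a])) B = subst (inst [a]) (subst (up (inst ?Ms')) B)"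
        by (simp add: inst_snoc inst_single_up)
      then have rB: "reds D0 (subst (inst (?Ms' @ [a])) B) (subst (inst [a]) B1)"
        using reds_subst[OF g0 x(2)] by simp
      have tb: "ty D0 c i (subst (inst [a]) B1) (PB a)" using x(4) pa by blast
      then have sb: "sem (subst (inst [a]) B1) (PB a)" unfolding sem_def by blast
      have pe: "P = PB a" by (rule sem_fun[OF p(1) sb jn_reds[OF rB]])
      have rr: "reds D0 (App (Lab l ?Ms') a) (subst (inst (?Ms' @ [a])) L)"
        by (rule reds_step, rule red_lab[OF inD0]) (simp add: len)
      show "PB a (App (Lab l ?Ms') a)" by (rule ty_bwP[OF tb _ rr]) (use p(2) pe in simp)
    qed
    then have "Q (Lab l ?Ms')" using x(5) by simp
    then show "\<exists>P. sem (subst \<sigma> (subst (inst Ms) (Pi A B))) P \<and> P (subst \<sigma> (Lab l Ms))"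
      using q eqT unfolding sem_def by auto
  qed
  then show ?case using lab by blast
next
  case wf_empty then show ?case by (simp add: labsOK_def)
next
  case (wf_label \<Delta> As A B i M l)
  have s: "set \<Delta> \<subseteq> set D0" using wf_label.prems by auto
  have lab: "labsOK \<Delta>" using wf_label.IH(1) s by blast
  have p1: "\<forall>\<sigma>. valid \<sigma> (rev As) \<longrightarrow> (\<exists>i Q. ty D0 c i (subst \<sigma> (Pi A B)) Q)"
    using wf_label.IH(1) s sem_Univ by fastforce
  have p2: "\<forall>\<sigma>. valid \<sigma> (A # rev As) \<longrightarrow> (\<exists>P. sem (subst \<sigma> B) P \<and> P (subst \<sigma> M))"
    using wf_label.IH(2) s by blast
  have "labOK As A M B" unfolding labOK_def using p1 p2 by blast
  then show ?case using lab unfolding labsOK_def by auto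
next
  case (wf_cons \<Delta> \<Gamma> A i)
  then show ?case by blast
qed

end

theorem theorem3p24:
  shows "\<not> (\<exists>\<Delta> i M. typing \<Delta> [] M (Pi (Univ i) (Var 0)))"
proof
  assume "\<exists>\<Delta> i M. typing \<Delta> [] M (Pi (Univ i) (Var 0))"
  then obtain \<Delta> i M where tM: "typing \<Delta> [] M (Pi (Univ i) (Var 0))" by blast
  have g: "goodD \<Delta>" using typing_good(1)[OF tM] by blast
  obtain c where c: "c \<notin> fst ` set \<Delta>"
    using ex_new_if_finite[OF infinite_UNIV_nat, of "fst ` set \<Delta>"] by blast
  interpret FL \<Delta> c using g c by unfold_locales
  have "valid Var []" by (simp add: valid_def)
  then obtain P where p: "sem (subst Var (Pi (Univ i) (Var 0))) P" "P (subst Var M)"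
    using fund(1)[OF tM] by blast
  then have p1: "sem (Pi (Univ i) (Var 0)) P" and p2: "P M" by (simp_all add: subst_Var up_Var)
  obtain k where "ty \<Delta> c k (Pi (Univ i) (Var 0)) P" using p1 unfolding sem_def by blast
  from ty_Pi[OF this] obtain A1 B1 PA PB where x: "reds \<Delta> (Univ i) A1" "reds \<Delta> (Var 0) B1"
       "ty \<Delta> c k A1 PA" "\<forall>a. PA a \<longrightarrow> ty \<Delta> c k (subst (inst [a]) B1) (PB a)"
       "P = (\<lambda>f. \<forall>a. PA a \<longrightarrow> PB a (App f a))" by blast
  have a1: "A1 = Univ i" using reds_Univ[OF x(1)] .
  have b1: "B1 = Var 0" using reds_Var[OF x(2)] .
  have pa: "PA = (\<lambda>t. \<exists>Q. ty \<Delta> c i t Q)" using ty_Univ x(3) a1 by blast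
  have opq: "ty \<Delta> c i (Lab c []) (\<lambda>_. False)" unfolding ty_def by (rule tyR.r_opq[OF reds_refl])
  then have "PA (Lab c [])" using pa by auto
  then have t: "ty \<Delta> c k (Lab c []) (PB (Lab c []))" and pb: "PB (Lab c []) (App M (Lab c []))"
    using x(4,5) p2 b1 by (auto simp: inst_def)
  have "PB (Lab c []) = (\<lambda>_. False)" using ty_fun[OF g t opq jn_reds[OF reds_refl]] .
  then show False using pb by simp
qed


end
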